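(* Let $(V,d,k,q)$ be an instance of the individually fair $k$-center with outliers problem (IF$k$CO) as defined in the context and let $l\ge 0$ be an integer. Then the refined algorithm (Algorithm 3) described in the context, run with parameter $l$, outputs a feasible solution $(S,O,\sigma)$ for this instance, i.e. $|S|\le k$ and $|O|\le q$.
   Context: IF$k$CO instance: a finite set $V$ with $|V|=n$, a metric $d$ on $V$ (nonnegative, symmetric, $d_{ii}=0$, triangle inequality), and integers $k\ge 1$ and $q\ge 0$. For $i\in V$, $NR_q(i)$ is the distance from $i$ to its $\lceil (n-q)/k\rceil$-th nearest neighbor in $V$, where $i$ counts as its own (first) nearest neighbor. A solution is $(S,O,\sigma)$ with $S,O\subseteq V$ and $\sigma:V\setminus O\to S$; feasible if $|S|\le k$, $|O|\le q$. For $\beta>0$, procedure $A(\beta)$: set $P:=V$, $S:=\emptyset$; while $P\ne\emptyset$ and $|S|<k$: pick $s\in P$ minimizing $NR_q(i)$ over $i\in P$, set $S:=S\cup\{s\}$, $P:=\{i\in P: d_{is}>\beta\, NR_q(i)\}$; finally set $O:=P$ and let $\sigma(i)$ be a nearest center in $S$ for each $i\in V\setminus O$. Algorithm 2 is $A(2)$. Algorithm 3 (input: instance and integer $l\ge0$): compute $(S,O,\sigma):=$ output of Algorithm 2; set $t:=0$, $\beta_1:=1$, $\beta_2:=2$, $\beta:=\beta_1$. While $t<l$: run $A(\beta)$ obtaining $(S_\beta,O_\beta,\sigma_\beta)$; if $|O_\beta|>q$, set $\beta_1:=\beta$; if $|O_\beta|\le q$, set $(S,O,\sigma):=(S_\beta,O_\beta,\sigma_\beta)$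 and $\beta_2:=\beta$; in either case then set $\beta:=(\beta_1+\beta_2)/2$ and $t:=t+1$. Output $(S,O,\sigma)$. *)

theory Defs
  imports Complex_Main "HOL-Library.Multiset"
begin

definition ifkco_metric :: "'a set \<Rightarrow> ('a \<Rightarrow> 'a \<Rightarrow> real) \<Rightarrow> bool" where
  "ifkco_metric V d \<longleftrightarrow>
     (\<forall>i\<in>V. d i i = 0) \<and>
     (\<forall>i\<in>V. \<forall>j\<in>V. 0 \<le> d i j \<and> d i j = d j i) \<and>
     (\<forall>i\<in>V. \<forall>j\<in>V. \<forall>h\<in>V. d i h \<le> d i j + d j h)"

definition nr_rank :: "'a set \<Rightarrow> nat \<Rightarrow> nat \<Rightarrow> int" where
  "nr_rank V k q = \<lceil>(real (card V) - real q) / real k\<rceil>"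

text \<open>NR_q(i): the m-th smallest element of the multiset of distances from i to the
  points of V (i itself contributes distance 0, its own first nearest neighbour).
  Convention: if m \<le> 0 (only possible when q \<ge> n), the 1st nearest neighbour is used.\<close>
definition NR :: "'a set \<Rightarrow> ('a \<Rightarrow> 'a \<Rightarrow> real) \<Rightarrow> nat \<Rightarrow> nat \<Rightarrow> 'a \<Rightarrow> real" where
  "NR V d k q i =
     sorted_list_of_multiset (image_mset (d i) (mset_set V)) ! (nat (nr_rank V k q) - 1)"

definition A_step :: "'a set \<Rightarrow> ('a \<Rightarrow> 'a \<Rightarrow> real) \<Rightarrow> nat \<Rightarrow> nat \<Rightarrow> real
      \<Rightarrow> 'a set \<times> 'a set \<Rightarrow> 'a set \<times> 'a set \<Rightarrow> bool" where
  "A_step V d k q \<beta> st st' \<longleftrightarrow>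
     (let S = fst st; P = snd st in
       P \<noteq> {} \<and> card S < k \<and>
       (\<exists>s\<in>P. (\<forall>i\<in>P. NR V d k q s \<le> NR V d k q i) \<and>
              st' = (insert s S, {i\<in>P. d i s > \<beta> * NR V d k q i})))"

definition A_out :: "'a set \<Rightarrow> ('a \<Rightarrow> 'a \<Rightarrow> real) \<Rightarrow> nat \<Rightarrow> nat \<Rightarrow> real
      \<Rightarrow> 'a set \<times> 'a set \<times> ('a \<Rightarrow> 'a) \<Rightarrow> bool" where
  "A_out V d k q \<beta> sol \<longleftrightarrow>
     (case sol of (S, Out, \<sigma>) \<Rightarrow>
        (A_step V d k q \<beta>)\<^sup>*\<^sup>* ({}, V) (S, Out) \<and>
        \<not> (Out \<noteq> {} \<and> card S < k) \<and>
        (\<forall>i\<in>V - Out. \<sigma> i \<in> S \<and> (\<forall>s\<in>S. d i (\<sigma> i) \<le> d i s)))"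

inductive alg3_state :: "'a set \<Rightarrow> ('a \<Rightarrow> 'a \<Rightarrow> real) \<Rightarrow> nat \<Rightarrow> nat \<Rightarrow> nat
      \<Rightarrow> nat \<Rightarrow> real \<Rightarrow> real \<Rightarrow> real \<Rightarrow> 'a set \<times> 'a set \<times> ('a \<Rightarrow> 'a) \<Rightarrow> bool"
  for V d k q l where
  init: "A_out V d k q 2 sol \<Longrightarrow> alg3_state V d k q l 0 1 2 1 sol"
| infeasible: "\<lbrakk>alg3_state V d k q l t b1 b2 b sol; t < l; A_out V d k q b (Sb, Ob, \<sigma>b);
      card Ob > q\<rbrakk> \<Longrightarrow> alg3_state V d k q l (Suc t) b b2 ((b + b2) / 2) sol"
| feasible: "\<lbrakk>alg3_state V d k q l t b1 b2 b sol; t < l; A_out V d k q b (Sb, Ob, \<sigma>b);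
      card Ob \<le> q\<rbrakk> \<Longrightarrow> alg3_state V d k q l (Suc t) b1 b ((b1 + b) / 2) (Sb, Ob, \<sigma>b)"

definition alg3_out :: "'a set \<Rightarrow> ('a \<Rightarrow> 'a \<Rightarrow> real) \<Rightarrow> nat \<Rightarrow> nat \<Rightarrow> nat
      \<Rightarrow> 'a set \<times> 'a set \<times> ('a \<Rightarrow> 'a) \<Rightarrow> bool" where
  "alg3_out V d k q l sol \<longleftrightarrow> (\<exists>b1 b2 b. alg3_state V d k q l l b1 b2 b sol)"

end

theory Submission imports Defs begin
lemma card_filter_mset: "finite V \<Longrightarrow> card {j\<in>V. P (f j)} = size (filter_mset P (image_mset f (mset_set V)))"
  by (simp add: filter_mset_image_mset)
lemma sorted_take: assumes "sorted L" "m \<le> length L" "1 \<le> m" shows "m \<le> length (filter (\<lambda>x. x \<le> L!(m-1)) L)"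
proof -
  have "filter (\<lambda>x. x \<le> L!(m-1)) (take m L) = take m L"
  proof (rule filter_True, rule ballI)
    fix x assume "x \<in> set (take m L)"
    then obtain i where "i < m" "x = L!i" using assms(2) by (auto simp: in_set_conv_nth)
    then show "x \<le> L!(m-1)" using assms sorted_nth_mono[of L i "m-1"] by auto
  qed
  moreover have "L = take m L @ drop m L" by simp
  hence "length (filter (\<lambda>x. x \<le> L!(m-1)) L) = length (filter (\<lambda>x. x \<le> L!(m-1)) (take m L)) + length (filter (\<lambda>x. x \<le> L!(m-1)) (drop m L))"
    by (metis filter_append length_append)
  ultimately show ?thesis using assms(2) by simp
qed

lemma NR_ball:
  assumes fin: "finite V" and m1: "1 \<le> nr_rank V k q" and mn: "nat (nr_rank V k q) \<le> card V"
  shows "nat (nr_rank V k q) \<le> card {j\<in>V. d s j \<le> NR V d k q s}"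
proof -
  define M where "M = image_mset (d s) (mset_set V)"
  define L where "L = sorted_list_of_multiset M"
  define m where "m = nat (nr_rank V k q)"
  have len: "length L = card V" unfolding L_def M_def using fin
    by (metis mset_sorted_list_of_multiset size_image_mset size_mset size_mset_set)
  have NRe: "NR V d k q s = L!(m-1)" unfolding NR_def L_def M_def m_def by simp
  have "card {j\<in>V. d s j \<le> NR V d k q s} = size (filter_mset (\<lambda>x. x \<le> L!(m-1)) M)"
    unfolding M_def NRe using card_filter_mset[OF fin, of "\<lambda>x. x \<le> L!(m-1)" "d s"] by simp
  also have "\<dots> = length (filter (\<lambda>x. x \<le> L!(m-1)) L)"
    unfolding L_def by (metis mset_filter mset_sorted_list_of_multiset size_mset)
  finally have eq: "card {j\<in>V. d s j \<le> NR V d k q s} = length (filter (\<lambda>x. x \<le> L!(m-1)) L)" .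
  have "m \<le> length (filter (\<lambda>x. x \<le> L!(m-1)) L)"
    by (rule sorted_take) (use len mn m1 in \<open>auto simp: L_def m_def\<close>)
  then show ?thesis using eq m_def by simp
qed

lemma NR_nonneg:
  assumes fin: "finite V" and met: "ifkco_metric V d" and i: "i \<in> V"
  shows "0 \<le> NR V d k q i"
proof -
  define M where "M = image_mset (d i) (mset_set V)"
  define L where "L = sorted_list_of_multiset M"
  have len: "length L = card V" unfolding L_def M_def using fin
    by (metis mset_sorted_list_of_multiset size_image_mset size_mset size_mset_set)
  have "card V > 0" using fin i card_gt_0_iff by blast
  have "nat (nr_rank V k q) - 1 < card V"
  proof -
    have "(real (card V) - real q) / real k \<le> real (card V)"
    proof (cases "k = 0")
      case False
      have k1: "real k \<ge> 1" using False by simp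
      have "(real (card V) - real q) / real k \<le> real (card V) / real k"
        using k1 by (simp add: divide_right_mono)
      also have "\<dots> \<le> real (card V)"
      proof -
        have "real (card V) * 1 \<le> real (card V) * real k" using k1 by (intro mult_left_mono) auto
        then show ?thesis using k1 by (simp add: divide_le_eq)
      qed
      finally have "(real (card V) - real q) / real k \<le> real (card V)" .
      then show ?thesis by simp
    qed simp
    hence "nr_rank V k q \<le> int (card V)" unfolding nr_rank_def
      by (simp add: ceiling_le_iff)
    then show ?thesis using \<open>card V > 0\<close> by linarith
  qed
  hence "NR V d k q i \<in> set L" unfolding NR_def using len
    by (metis L_def M_def nth_mem)
  hence "NR V d k q i \<in># M" unfolding L_def by simp
  then obtain j where "j \<in> V" "NR V d k q i = d i j" unfolding M_def using fin by auto
  then show ?thesis using met i unfolding ifkco_metric_def by auto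
qed


lemma A_card:
  assumes "(A_step V d k q \<beta>)\<^sup>*\<^sup>* st0 st" "finite (fst st0)" "card (fst st0) \<le> k"
  shows "finite (fst st) \<and> card (fst st) \<le> k"
  using assms
proof (induction rule: rtranclp_induct)
  case base then show ?case by simp
next
  case (step y z)
  then show ?case unfolding A_step_def Let_def
    by (auto simp: card_insert_if)
qed

definition ball2 where "ball2 V d k q s = {j\<in>V. d s j \<le> NR V d k q s}"

definition inv2 where "inv2 V d k q st \<longleftrightarrow> (let S = fst st; P = snd st in
  P \<subseteq> V \<and> S \<subseteq> V \<and> finite S \<and> card S \<le> k \<and>
  (\<forall>s\<in>S. \<forall>i\<in>P. NR V d k q s \<le> NR V d k q i \<and> d i s > 2 * NR V d k q i) \<and>
  (\<forall>s\<in>S. ball2 V d k q s \<inter> P = {}) \<and>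
  (\<forall>s1\<in>S. \<forall>s2\<in>S. s1 \<noteq> s2 \<longrightarrow> ball2 V d k q s1 \<inter> ball2 V d k q s2 = {}))"

lemma inv2_step:
  assumes fin: "finite V" and met: "ifkco_metric V d"
    and st: "A_step V d k q 2 (S, P) (S', P')" and inv: "inv2 V d k q (S, P)"
  shows "inv2 V d k q (S', P')"
proof -
  from st obtain s where sP: "s \<in> P" and smin: "\<forall>i\<in>P. NR V d k q s \<le> NR V d k q i"
    and S': "S' = insert s S" and P': "P' = {i\<in>P. d i s > 2 * NR V d k q i}"
    and ck: "card S < k"
    unfolding A_step_def Let_def by auto
  note I = inv[unfolded inv2_def Let_def, simplified]
  have PV: "P \<subseteq> V" and SV: "S \<subseteq> V" and fS: "finite S" using I by auto
  have sV: "s \<in> V" using sP PV by auto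
  have b: "\<forall>s\<in>S. \<forall>i\<in>P. NR V d k q s \<le> NR V d k q i \<and> d i s > 2 * NR V d k q i" using I by blast
  have c: "\<forall>s\<in>S. ball2 V d k q s \<inter> P = {}" using I by blast
  have dd: "\<forall>s1\<in>S. \<forall>s2\<in>S. s1 \<noteq> s2 \<longrightarrow> ball2 V d k q s1 \<inter> ball2 V d k q s2 = {}" using I by blast
  have sym: "\<And>i j. i \<in> V \<Longrightarrow> j \<in> V \<Longrightarrow> d i j = d j i" using met unfolding ifkco_metric_def by blast
  have tri: "\<And>i j h. i \<in> V \<Longrightarrow> j \<in> V \<Longrightarrow> h \<in> V \<Longrightarrow> d i h \<le> d i j + d j h"
    using met unfolding ifkco_metric_def by blast
  have nn: "\<And>i. i \<in> V \<Longrightarrow> 0 \<le> NR V d k q i" using NR_nonneg[OF fin met] by blast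
  have P'P: "P' \<subseteq> P" using P' by auto
  have A1: "P' \<subseteq> V \<and> S' \<subseteq> V \<and> finite S' \<and> card S' \<le> k"
    using PV SV fS sV ck P'P S' by (auto simp: card_insert_if)
  have A2: "\<forall>t\<in>S'. \<forall>i\<in>P'. NR V d k q t \<le> NR V d k q i \<and> d i t > 2 * NR V d k q i"
    using b P'P smin S' P' by blast
  have A3: "\<forall>t\<in>S'. ball2 V d k q t \<inter> P' = {}"
  proof
    fix t assume "t \<in> S'"
    show "ball2 V d k q t \<inter> P' = {}"
    proof (cases "t = s")
      case True
      show ?thesis
      proof (rule ccontr)
        assume "ball2 V d k q t \<inter> P' \<noteq> {}"
        then obtain j where j: "j \<in> V" "d s j \<le> NR V d k q s" "j \<in> P'"
          using True unfolding ball2_def by auto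
        have "j \<in> P" using j P'P by auto
        hence "NR V d k q s \<le> NR V d k q j" using smin by auto
        moreover have "d j s > 2 * NR V d k q j" using j P' by auto
        moreover have "d j s = d s j" using sym j sV by auto
        moreover have "0 \<le> NR V d k q j" using nn j by auto
        ultimately show False using j by linarith
      qed
    next
      case False
      then show ?thesis using \<open>t \<in> S'\<close> S' c P'P by blast
    qed
  qed
  have new: "ball2 V d k q s \<inter> ball2 V d k q t = {}" if tS: "t \<in> S" for t
  proof (rule ccontr)
    assume "ball2 V d k q s \<inter> ball2 V d k q t \<noteq> {}"
    then obtain j where j: "j \<in> V" "d s j \<le> NR V d k q s" "d t j \<le> NR V d k q t"
      unfolding ball2_def by auto
    have tV: "t \<in> V" using tS SV by auto
    have "NR V d k q t \<le> NR V d k q s" "d s t > 2 * NR V d k q s" using b tS sP by auto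
    moreover have "d s t \<le> d s j + d j t" using tri sV j tV by auto
    moreover have "d j t = d t j" using sym j tV by auto
    ultimately show False using j by linarith
  qed
  have A4: "\<forall>s1\<in>S'. \<forall>s2\<in>S'. s1 \<noteq> s2 \<longrightarrow> ball2 V d k q s1 \<inter> ball2 V d k q s2 = {}"
    using dd new S' by blast
  show ?thesis unfolding inv2_def Let_def using A1 A2 A3 A4 by simp
qed

lemma inv2_reach:
  assumes fin: "finite V" and met: "ifkco_metric V d"
    and r: "(A_step V d k q 2)\<^sup>*\<^sup>* ({}, V) st"
  shows "inv2 V d k q st"
  using r
proof (induction rule: rtranclp_induct)
  case base then show ?case unfolding inv2_def by simp
next
  case (step y z)
  then show ?case using inv2_step[OF fin met] by (metis prod.collapse)
qed


lemma rank_le: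
  assumes "k \<ge> 1" shows "nr_rank V k q \<le> int (card V)"
proof -
  have k1: "real k \<ge> 1" using assms by simp
  have "(real (card V) - real q) / real k \<le> real (card V) / real k"
    using k1 by (simp add: divide_right_mono)
  also have "\<dots> \<le> real (card V)"
  proof -
    have "real (card V) * 1 \<le> real (card V) * real k" using k1 by (intro mult_left_mono) auto
    then show ?thesis using k1 by (simp add: divide_le_eq)
  qed
  finally show ?thesis unfolding nr_rank_def by (simp add: ceiling_le_iff)
qed

lemma A2_feasible:
  assumes fin: "finite V" and met: "ifkco_metric V d" and k1: "k \<ge> 1"
    and out: "A_out V d k q 2 (S, Out, \<sigma>)"
  shows "card Out \<le> q"
proof -
  have r: "(A_step V d k q 2)\<^sup>*\<^sup>* ({}, V) (S, Out)" and fin_cond: "\<not> (Out \<noteq> {} \<and> card S < k)"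
    using out unfolding A_out_def by auto
  note I = inv2_reach[OF fin met r, unfolded inv2_def Let_def, simplified]
  have OV: "Out \<subseteq> V" and SV: "S \<subseteq> V" and fS: "finite S" and cS: "card S \<le> k" using I by auto
  have c: "\<forall>s\<in>S. ball2 V d k q s \<inter> Out = {}" using I by blast
  have dd: "\<forall>s1\<in>S. \<forall>s2\<in>S. s1 \<noteq> s2 \<longrightarrow> ball2 V d k q s1 \<inter> ball2 V d k q s2 = {}" using I by blast
  show ?thesis
  proof (cases "Out = {}")
    case True then show ?thesis by simp
  next
    case False
    hence cSk: "card S = k" using fin_cond cS by auto
    show ?thesis
    proof (cases "nr_rank V k q \<le> 0")
      case True
      hence "(real (card V) - real q) / real k \<le> 0" unfolding nr_rank_def
        by (meson ceiling_le_zero)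
      hence "real (card V) \<le> real q" using k1
        by (simp add: divide_le_0_iff)
      hence "card V \<le> q" by simp
      moreover have "card Out \<le> card V" using OV fin card_mono by blast
      ultimately show ?thesis by simp
    next
      case False
      define m where "m = nat (nr_rank V k q)"
      have m1: "1 \<le> nr_rank V k q" using False by simp
      have mn: "m \<le> card V" using rank_le[OF k1, of V q] m_def by simp
      have bc: "\<And>s. m \<le> card (ball2 V d k q s)" unfolding ball2_def m_def
        using NR_ball[OF fin m1] mn m_def by simp
      define U where "U = (\<Union>s\<in>S. ball2 V d k q s)"
      have UV: "U \<subseteq> V - Out" unfolding U_def ball2_def using c unfolding ball2_def by blast
      have fb: "\<And>s. finite (ball2 V d k q s)" unfolding ball2_def using fin by simp
      have "card U = (\<Sum>s\<in>S. card (ball2 V d k q s))" unfolding U_def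
        by (rule card_UN_disjoint) (use fS fb dd in auto)
      also have "\<dots> \<ge> k * m" using sum_bounded_below[of S m "\<lambda>s. card (ball2 V d k q s)"] bc cSk
        by (simp add: mult.commute)
      finally have "k * m \<le> card U" .
      moreover have "card U \<le> card (V - Out)" using UV fin by (simp add: card_mono)
      moreover have "card (V - Out) = card V - card Out" using OV fin
        by (meson card_Diff_subset finite_subset)
      moreover have "card Out \<le> card V" using OV fin card_mono by blast
      moreover have "real (card V) - real q \<le> real k * real m"
      proof -
        have rm: "real m = real_of_int (nr_rank V k q)" using m1 m_def by simp
        have "(real (card V) - real q) / real k \<le> real m" unfolding rm nr_rank_def
          by (rule le_of_int_ceiling)
        then show ?thesis using k1 by (simp add: divide_le_eq mult.commute)
      qed
      hence "real (card V) \<le> real (q + k * m)" by simp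
      hence "card V \<le> q + k * m" by (simp only: of_nat_le_iff)
      ultimately show ?thesis by linarith
    qed
  qed
qed

theorem lemma5:
  fixes V :: "'a set" and d :: "'a \<Rightarrow> 'a \<Rightarrow> real" and k q l :: nat
    and S Out :: "'a set" and \<sigma> :: "'a \<Rightarrow> 'a"
  assumes "finite V"
    and "ifkco_metric V d"
    and "k \<ge> 1"
    and "alg3_out V d k q l (S, Out, \<sigma>)"
  shows "card S \<le> k \<and> card Out \<le> q"
proof -
  obtain b1 b2 b where st: "alg3_state V d k q l l b1 b2 b (S, Out, \<sigma>)"
    using assms(4) unfolding alg3_out_def by blast
  have "\<And>t b1 b2 b sol. alg3_state V d k q l t b1 b2 b sol \<Longrightarrow>
     card (fst sol) \<le> k \<and> card (fst (snd sol)) \<le> q"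
  proof -
    fix t b1 b2 b sol
    assume "alg3_state V d k q l t b1 b2 b sol"
    then show "card (fst sol) \<le> k \<and> card (fst (snd sol)) \<le> q"
    proof (induction rule: alg3_state.induct)
      case (init sol)
      obtain S0 O0 s0 where sol: "sol = (S0, O0, s0)" by (metis prod.collapse)
      have "card S0 \<le> k" using init sol A_card[of V d k q 2 "({}, V)" "(S0, O0)"]
        unfolding A_out_def by auto
      moreover have "card O0 \<le> q" using A2_feasible[OF assms(1,2,3)] init sol by blast
      ultimately show ?case using sol by simp
    next
      case (infeasible t b1 b2 b sol Sb Ob \<sigma>b)
      then show ?case by simp
    next
      case (feasible t b1 b2 b sol Sb Ob \<sigma>b)
      have "card Sb \<le> k" using feasible(3) A_card[of V d k q b "({}, V)" "(Sb, Ob)"]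
        unfolding A_out_def by auto
      then show ?case using feasible(4) by simp
    qed
  qed
  from this[OF st] show ?thesis by simp
qed

end
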